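(* Let $f$ be the staircase function with descriptor $(h,o,\delta,\ell,L,V)$. For every integer $i\in[h]$, the fitness signal of step $i$ of $f$ is $S(\text{step } i)=\delta/2^{o(i-1)}$.
   Context: For a positive integer $n$, $[n]=\{1,\dots,n\}$ and $\mathfrak B_\ell$ is the set of binary strings of length $\ell$; $g_j$ denotes the $j$-th bit of $g$. For a $k$-tuple $x=(x_1,\dots,x_k)$ of integers in $[\ell]$ and $g\in\mathfrak B_\ell$, $\Xi_x(g)$ is the string $g_{x_1}g_{x_2}\cdots g_{x_k}$. For a matrix $M$, $M_{i:}$ is its $i$-th row (as a tuple). A staircase function descriptor is a tuple $(h,o,\delta,\ell,L,V)$ where $h,o,\ell$ are positive integers with $ho\le \ell$, $\delta>0$ is real, $V$ is an $h\times o$ matrix of bits, and $L$ is an $h\times o$ matrix whose $ho$ entries are pairwise distinct integers in $[\ell]$. The staircase function $f$ with this descriptor is the stochastic function on $\mathfrak B_\ell$ computed as follows on input $g$: draw $x\sim\mathcal N(0,1)$ (independently at each evaluation); for $i=1,\dots,h$ in order: if $\Xi_{L_{i:}}(g)=V_{i1}\cdots V_{io}$ then set $x\leftarrow x+\delta$, otherwise set $x\leftarrow x-\delta/(2^o-1)$ and stop the loop; return $x$. Step $i$ of $f$ is the schema $\{g\in\mathfrak B_\ell:\Xi_{L_{i:}}(g)=V_{i1}\cdots V_{io}\}$; stage $i$ of $f$ is the schema of all $g$ lying in steps $1,\dots,i$ simultaneously. For a schema $\gamma\subseteq\mathfrak B_\ell$, $F_\gamma$ is the random variable giving the value of $f$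 at a string drawn uniformly from $\gamma$. The fitness signal of $\gamma$ is $S(\gamma)=\mathbf E[F_\gamma]-\mathbf E[F_{\mathfrak B_\ell}]$. *)

theory Defs
  imports "HOL-Probability.Probability"
begin

text \<open>Binary strings of length l are lists of booleans of length l; bit j (1-based) of g
is g ! (j - 1).\<close>

definition bitstrings :: "nat \<Rightarrow> bool list set" where
  "bitstrings l = {g. length g = l}"

definition bit :: "bool list \<Rightarrow> nat \<Rightarrow> bool" where
  "bit g j = g ! (j - 1)"

definition Xi :: "nat list \<Rightarrow> bool list \<Rightarrow> bool list" where
  "Xi x g = map (bit g) x"

text \<open>Matrices are functions on 1-based indices; row i of a matrix with w columns.\<close>
definition row :: "(nat \<Rightarrow> nat \<Rightarrow> 'a) \<Rightarrow> nat \<Rightarrow> nat \<Rightarrow> 'a list" where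
  "row M w i = map (M i) [1..<w + 1]"

definition is_staircase_descriptor ::
  "nat \<Rightarrow> nat \<Rightarrow> real \<Rightarrow> nat \<Rightarrow> (nat \<Rightarrow> nat \<Rightarrow> nat) \<Rightarrow> (nat \<Rightarrow> nat \<Rightarrow> bool) \<Rightarrow> bool" where
  "is_staircase_descriptor h w \<delta> l L V \<longleftrightarrow>
     0 < h \<and> 0 < w \<and> 0 < l \<and> h * w \<le> l \<and> 0 < \<delta> \<and>
     inj_on (\<lambda>(i, j). L i j) ({1..h} \<times> {1..w}) \<and>
     (\<forall>i\<in>{1..h}. \<forall>j\<in>{1..w}. L i j \<in> {1..l})"

fun stair_loop ::
  "nat \<Rightarrow> real \<Rightarrow> (nat \<Rightarrow> nat \<Rightarrow> nat) \<Rightarrow> (nat \<Rightarrow> nat \<Rightarrow> bool) \<Rightarrow> bool list \<Rightarrow> nat list \<Rightarrow> real \<Rightarrow> real" where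
  "stair_loop w \<delta> L V g [] x = x"
| "stair_loop w \<delta> L V g (i # is) x =
     (if Xi (row L w i) g = row V w i
      then stair_loop w \<delta> L V g is (x + \<delta>)
      else x - \<delta> / (2 ^ w - 1))"

definition staircase ::
  "nat \<Rightarrow> nat \<Rightarrow> real \<Rightarrow> nat \<Rightarrow> (nat \<Rightarrow> nat \<Rightarrow> nat) \<Rightarrow> (nat \<Rightarrow> nat \<Rightarrow> bool) \<Rightarrow> bool list \<Rightarrow> real measure" where
  "staircase h w \<delta> l L V g =
     distr (density lborel std_normal_density) borel (\<lambda>x. stair_loop w \<delta> L V g [1..<h + 1] x)"

definition step_schema ::
  "nat \<Rightarrow> nat \<Rightarrow> real \<Rightarrow> nat \<Rightarrow> (nat \<Rightarrow> nat \<Rightarrow> nat) \<Rightarrow> (nat \<Rightarrow> nat \<Rightarrow> bool) \<Rightarrow> nat \<Rightarrow> bool list set" where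
  "step_schema h w \<delta> l L V i = {g \<in> bitstrings l. Xi (row L w i) g = row V w i}"

definition F_schema ::
  "nat \<Rightarrow> nat \<Rightarrow> real \<Rightarrow> nat \<Rightarrow> (nat \<Rightarrow> nat \<Rightarrow> nat) \<Rightarrow> (nat \<Rightarrow> nat \<Rightarrow> bool) \<Rightarrow> bool list set \<Rightarrow> real measure" where
  "F_schema h w \<delta> l L V \<gamma> =
     measure_pmf (pmf_of_set \<gamma>) \<bind> (\<lambda>g. staircase h w \<delta> l L V g)"

definition fitness_signal ::
  "nat \<Rightarrow> nat \<Rightarrow> real \<Rightarrow> nat \<Rightarrow> (nat \<Rightarrow> nat \<Rightarrow> nat) \<Rightarrow> (nat \<Rightarrow> nat \<Rightarrow> bool) \<Rightarrow> bool list set \<Rightarrow> real" where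
  "fitness_signal h w \<delta> l L V \<gamma> =
     (\<integral>x. x \<partial>F_schema h w \<delta> l L V \<gamma>) - (\<integral>x. x \<partial>F_schema h w \<delta> l L V (bitstrings l))"

end

theory Submission imports Defs begin

lemma mix:
  fixes K :: "'a \<Rightarrow> real measure" and f :: "real \<Rightarrow> real"
  assumes A: "finite A" "A \<noteq> {}"
  and K: "\<And>g. K g \<in> space (subprob_algebra borel)"
  and f[measurable]: "f \<in> borel_measurable borel"
  and int: "\<And>g. g \<in> A \<Longrightarrow> integrable (K g) f"
  shows "integral\<^sup>L (measure_pmf (pmf_of_set A) \<bind> K) f = (\<Sum>g\<in>A. integral\<^sup>L (K g) f) / card A"
proof -
  let ?M = "measure_pmf (pmf_of_set A) \<bind> K"
  have N: "K \<in> measurable (measure_pmf (pmf_of_set A)) (subprob_algebra borel)" using K by simp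
  have sK: "\<And>g. sets (K g) = sets borel" using K by (simp add: space_subprob_algebra)
  have sets: "sets ?M = sets borel" by (rule sets_bind) (use sK in auto)
  have nn: "(\<integral>\<^sup>+x. \<phi> x \<partial>?M) = (\<Sum>g\<in>A. \<integral>\<^sup>+x. \<phi> x \<partial>K g) / of_nat (card A)"
    if "\<phi> \<in> borel_measurable borel" for \<phi> :: "real \<Rightarrow> ennreal"
    using nn_integral_bind[OF that N] nn_integral_pmf_of_set[OF A(2) A(1)] by simp
  define p where "p g = enn2real (\<integral>\<^sup>+x. ennreal (f x) \<partial>K g)" for g
  define q where "q g = enn2real (\<integral>\<^sup>+x. ennreal (- f x) \<partial>K g)" for g
  have P: "(\<integral>\<^sup>+x. ennreal (f x) \<partial>K g) = ennreal (p g)" if "g \<in> A" for g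
    using real_integrable_def[of "K g" f] int[OF that] unfolding p_def
    by (simp add: ennreal_enn2real_if)
  have Q: "(\<integral>\<^sup>+x. ennreal (- f x) \<partial>K g) = ennreal (q g)" if "g \<in> A" for g
    using real_integrable_def[of "K g" f] int[OF that] unfolding q_def
    by (simp add: ennreal_enn2real_if)
  have p0: "p g \<ge> 0" "q g \<ge> 0" for g by (auto simp: p_def q_def)
  have cA: "card A > 0" using A by (simp add: card_gt_0_iff)
  have MP: "(\<integral>\<^sup>+x. ennreal (f x) \<partial>?M) = ennreal ((\<Sum>g\<in>A. p g) / card A)"
    using P p0 cA by (simp add: nn ennreal_of_nat_eq_real_of_nat divide_ennreal sum_nonneg)
  have MQ: "(\<integral>\<^sup>+x. ennreal (- f x) \<partial>?M) = ennreal ((\<Sum>g\<in>A. q g) / card A)"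
    using Q p0 cA by (simp add: nn ennreal_of_nat_eq_real_of_nat divide_ennreal sum_nonneg)
  have fM: "f \<in> borel_measurable ?M" by (subst measurable_cong_sets[OF sets refl]) (rule f)
  have intM: "integrable ?M f" using fM MP MQ by (simp add: real_integrable_def)
  have "integral\<^sup>L ?M f = (\<Sum>g\<in>A. p g) / card A - (\<Sum>g\<in>A. q g) / card A"
    using real_lebesgue_integral_def[OF intM] MP MQ p0 by (simp add: sum_nonneg)
  also have "\<dots> = (\<Sum>g\<in>A. p g - q g) / card A" by (simp add: sum_subtractf diff_divide_distrib)
  also have "\<dots> = (\<Sum>g\<in>A. integral\<^sup>L (K g) f) / card A"
    using real_lebesgue_integral_def[OF int] P Q p0 by (intro arg_cong[where f="\<lambda>x. x / _"] sum.cong) auto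
  finally show ?thesis .
qed


lemma count_lists:
  assumes "T \<subseteq> {..<l}"
  shows "card {g::bool list. length g = l \<and> (\<forall>t\<in>T. g!t = v t)} = 2^(l - card T)"
proof -
  let ?X = "{g::bool list. length g = l \<and> (\<forall>t\<in>T. g!t = v t)}"
  let ?P = "PiE {..<l} (\<lambda>t. if t\<in>T then {v t} else UNIV)"
  have "bij_betw (\<lambda>g. restrict (nth g) {..<l}) ?X ?P"
  proof (rule bij_betw_byWitness[where f'="\<lambda>f. map f [0..<l]"])
    show "\<forall>a\<in>?X. map (restrict ((!) a) {..<l}) [0..<l] = a"
      by (auto intro!: nth_equalityI)
    show "\<forall>a'\<in>?P. restrict ((!) (map a' [0..<l])) {..<l} = a'"
      by (auto simp: PiE_def extensional_def restrict_def fun_eq_iff)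
    show "(\<lambda>g. restrict ((!) g) {..<l}) ` ?X \<subseteq> ?P"
      using assms by (auto simp: PiE_def)
    show "(\<lambda>f. map f [0..<l]) ` ?P \<subseteq> ?X"
      using assms by (auto simp: PiE_def Pi_def)
  qed
  then have "card ?X = card ?P" by (rule bij_betw_same_card)
  also have "\<dots> = (\<Prod>t<l. card (if t\<in>T then {v t} else (UNIV::bool set)))"
    by (simp add: card_PiE)
  also have "\<dots> = (\<Prod>t<l. (if t\<in>T then 1 else 2))"
    by (intro prod.cong) auto
  also have "\<dots> = 2 ^ card ({..<l} - T)"
    by (simp add: prod.If_cases Diff_eq)
  also have "card ({..<l} - T) = l - card T"
    using assms by (simp add: card_Diff_subset finite_subset)
  finally show ?thesis .
qed


definition stepP :: "nat \<Rightarrow> (nat \<Rightarrow> nat \<Rightarrow> nat) \<Rightarrow> (nat \<Rightarrow> nat \<Rightarrow> bool) \<Rightarrow> nat \<Rightarrow> bool list \<Rightarrow> bool" where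
  "stepP w L V j g \<longleftrightarrow> Xi (row L w j) g = row V w j"

lemma stepP_iff: "stepP w L V j g \<longleftrightarrow> (\<forall>m\<in>{1..w}. g ! (L j m - 1) = V j m)"
  by (auto simp: stepP_def Xi_def row_def map_eq_conv bit_def)

lemma all_less_Suc_cons: "(\<forall>m<Suc k. P ((a#xs)!m)) \<longleftrightarrow> P a \<and> (\<forall>m<k. P (xs!m))"
  by (auto simp: less_Suc_eq_0_disj)

lemma loop_sum:
  "stair_loop w \<delta> L V g xs x = x + (\<Sum>k<length xs. if (\<forall>m<k. stepP w L V (xs!m) g)
      then (if stepP w L V (xs!k) g then \<delta> else - (\<delta> / (2^w-1))) else 0)"
proof (induction xs arbitrary: x)
  case Nil
  then show ?case by simp
next
  case (Cons a xs)
  show ?case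
  proof (cases "stepP w L V a g")
    case True
    then show ?thesis using Cons
      by (simp only: length_Cons sum.lessThan_Suc_shift all_less_Suc_cons[where P="\<lambda>j. stepP w L V j g"] stair_loop.simps
            stepP_def[symmetric] nth_Cons_0 nth_Cons_Suc if_True) simp
  next
    case False
    then show ?thesis
      by (simp only: length_Cons sum.lessThan_Suc_shift all_less_Suc_cons[where P="\<lambda>j. stepP w L V j g"] stair_loop.simps
            stepP_def[symmetric] nth_Cons_0 nth_Cons_Suc if_False) simp
  qed
qed


lemma loop_shift: "stair_loop w \<delta> L V g xs x = x + stair_loop w \<delta> L V g xs 0"
  by (simp add: loop_sum)

lemma std_normal_x: "integrable (density lborel std_normal_density) (\<lambda>x. x)"
  "integral\<^sup>L (density lborel std_normal_density) (\<lambda>x. x) = 0"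
proof -
  have i: "integrable lborel (\<lambda>x. std_normal_density x * x)"
    using integrable_std_normal_moment[of 1] by simp
  show "integrable (density lborel std_normal_density) (\<lambda>x. x)"
    using i by (subst integrable_density) (auto simp: normal_density_nonneg)
  have "integral\<^sup>L (density lborel std_normal_density) (\<lambda>x. x) = integral\<^sup>L lborel (\<lambda>x. std_normal_density x * x)"
    by (subst integral_density) (auto simp: normal_density_nonneg)
  also have "\<dots> = 0" using integral_std_normal_moment_odd[of 0] by simp
  finally show "integral\<^sup>L (density lborel std_normal_density) (\<lambda>x. x) = 0" .
qed

lemma stair_props:
  shows "staircase h w \<delta> l L V g \<in> space (subprob_algebra borel)"
    and "integrable (staircase h w \<delta> l L V g) (\<lambda>x. x)"
    and "integral\<^sup>L (staircase h w \<delta> l L V g) (\<lambda>x. x) = stair_loop w \<delta> L V g [1..<h+1] 0"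
proof -
  define c where "c = stair_loop w \<delta> L V g [1..<h+1] 0"
  let ?N = "density lborel std_normal_density"
  have eq: "staircase h w \<delta> l L V g = distr ?N borel (\<lambda>x. x + c)"
  proof -
    have "(\<lambda>x. stair_loop w \<delta> L V g [1..<h+1] x) = (\<lambda>x. x + c)"
      unfolding c_def by (rule ext, rule loop_shift)
    then show ?thesis unfolding staircase_def by simp
  qed
  interpret N: prob_space ?N by (rule prob_space_normal_density) simp
  show "staircase h w \<delta> l L V g \<in> space (subprob_algebra borel)"
    unfolding eq by (auto simp: space_subprob_algebra intro!: prob_space_imp_subprob_space N.prob_space_distr)
  have iN: "integrable ?N (\<lambda>x. x + c)"
    using std_normal_x(1) by auto
  show "integrable (staircase h w \<delta> l L V g) (\<lambda>x. x)"
    unfolding eq using iN by (subst integrable_distr_eq) auto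
  have "integral\<^sup>L (staircase h w \<delta> l L V g) (\<lambda>x. x) = integral\<^sup>L ?N (\<lambda>x. x + c)"
    unfolding eq by (subst integral_distr) auto
  also have "\<dots> = c" using std_normal_x N.prob_space by (simp add: Bochner_Integration.integral_add)
  finally show "integral\<^sup>L (staircase h w \<delta> l L V g) (\<lambda>x. x) = stair_loop w \<delta> L V g [1..<h+1] 0"
    by (simp add: c_def)
qed


lemma cnt_B:
  assumes D: "is_staircase_descriptor h w \<delta> l L V" and J: "J \<subseteq> {1..h}"
  shows "card {g\<in>bitstrings l. \<forall>j\<in>J. stepP w L V j g} = 2^(l - w * card J)"
proof -
  define D where "D = {1..h} \<times> {1..w}"
  define \<phi> where "\<phi> = (\<lambda>(j,m). L j m - 1)"
  have injL: "inj_on (\<lambda>(i, j). L i j) D" and Lr: "\<And>i j. i\<in>{1..h} \<Longrightarrow> j\<in>{1..w} \<Longrightarrow> L i j \<in> {1..l}"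
    and wh: "h * w \<le> l"
    using D unfolding is_staircase_descriptor_def D_def by auto
  have inj: "inj_on \<phi> D"
  proof (rule inj_onI)
    fix x y assume x: "x \<in> D" and y: "y \<in> D" and e: "\<phi> x = \<phi> y"
    obtain a b where [simp]: "x = (a,b)" by force
    obtain c d where [simp]: "y = (c,d)" by force
    have "L a b \<ge> 1" "L c d \<ge> 1" using Lr x y by (auto simp: D_def)
    then have "L a b = L c d" using e by (simp add: \<phi>_def)
    then have "(\<lambda>(i, j). L i j) (a,b) = (\<lambda>(i, j). L i j) (c,d)" by simp
    then show "x = y" using inj_onD[OF injL _ x y] by simp
  qed
  define v where "v t = case_prod V (inv_into D \<phi> t)" for t
  define T where "T = \<phi> ` (J \<times> {1..w})"
  have sub: "J \<times> {1..w} \<subseteq> D" using J by (auto simp: D_def)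
  have vphi: "v (L j m - 1) = V j m" if "j \<in> J" "m \<in> {1..w}" for j m
  proof -
    have "(j,m) \<in> D" using sub that by auto
    then have "inv_into D \<phi> (\<phi> (j,m)) = (j,m)" by (rule inv_into_f_f[OF inj])
    then show ?thesis by (simp add: v_def \<phi>_def)
  qed
  have seteq: "{g\<in>bitstrings l. \<forall>j\<in>J. stepP w L V j g} = {g. length g = l \<and> (\<forall>t\<in>T. g!t = v t)}"
  proof -
    have vphi': "v (L j m - Suc 0) = V j m" if "j \<in> J" "Suc 0 \<le> m" "m \<le> w" for j m
      using vphi[of j m] that by simp
    show ?thesis by (auto simp: bitstrings_def stepP_iff T_def \<phi>_def vphi')
  qed
  have finJ: "finite J" using J finite_subset by blast
  have cT: "card T = w * card J"
    unfolding T_def using inj_on_subset[OF inj sub] finJ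
    by (simp add: card_image card_cartesian_product)
  have Tsub: "T \<subseteq> {..<l}"
  proof
    fix t assume "t \<in> T"
    then obtain j m where "j \<in> J" "m \<in> {1..w}" "t = L j m - 1" by (auto simp: T_def \<phi>_def)
    moreover have "L j m \<in> {1..l}" using Lr J calculation by auto
    ultimately show "t \<in> {..<l}" by auto
  qed
  show ?thesis unfolding seteq using count_lists[OF Tsub, of v] cT by simp
qed

lemma sum_ite:
  assumes "finite S"
  shows "(\<Sum>g\<in>S. if A g then (if B g then a else b) else 0) =
    a * real (card {g\<in>S. A g \<and> B g}) + b * (real (card {g\<in>S. A g}) - real (card {g\<in>S. A g \<and> B g}))"
proof -
  have "(\<Sum>g\<in>S. if A g then (if B g then a else b) else 0) =
     (\<Sum>g\<in>S. a * (if A g \<and> B g then 1 else 0) + b * ((if A g then 1 else 0) - (if A g \<and> B g then 1 else 0)))"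
    by (intro sum.cong) auto
  also have "\<dots> = a * (\<Sum>g\<in>S. if A g \<and> B g then 1 else 0) + b * ((\<Sum>g\<in>S. if A g then 1 else 0) - (\<Sum>g\<in>S. if A g \<and> B g then 1 else 0))"
    by (simp add: sum.distrib sum_distrib_left sum_subtractf right_diff_distrib)
  also have "\<dots> = a * real (card {g\<in>S. A g \<and> B g}) + b * (real (card {g\<in>S. A g}) - real (card {g\<in>S. A g \<and> B g}))"
    using assms by (simp add: sum.If_cases Int_def conj_commute)
  finally show ?thesis .
qed


lemma all_shift1: "(\<forall>m<k. Q (Suc m)) \<longleftrightarrow> (\<forall>j\<in>{1..k}. Q j)"
proof
  assume a: "\<forall>m<k. Q (Suc m)"
  show "\<forall>j\<in>{1..k}. Q j"
  proof
    fix j assume "j \<in> {1..k}"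
    then have "j = Suc (j - 1)" "j - 1 < k" by auto
    then show "Q j" using a by metis
  qed
qed auto

lemma all_shift2: "(\<forall>m<k. Q (Suc m)) \<and> Q (Suc k) \<longleftrightarrow> (\<forall>j\<in>{1..Suc k}. Q j)"
  unfolding all_shift1 by (simp add: atLeastAtMostSuc_conv conj_commute)

lemma set_shift1: "{g\<in>S. \<forall>m<k. P (Suc m) g} = {g\<in>S. \<forall>j\<in>{1..k}. P j g}"
  apply (rule Collect_cong) subgoal for g using all_shift1[of k "\<lambda>j. P j g"] by simp done

lemma set_shift2: "{g\<in>S. (\<forall>m<k. P (Suc m) g) \<and> P (Suc k) g} = {g\<in>S. \<forall>j\<in>{1..Suc k}. P j g}"
  apply (rule Collect_cong) subgoal for g using all_shift2[of k "\<lambda>j. P j g"] by simp done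

lemma nth_h: "m < h \<Longrightarrow> [1..<h+1]!m = Suc m"
  using nth_upt[of 1 m "h+1"] by simp

lemma sum_c:
  assumes "finite S"
  shows "(\<Sum>g\<in>S. stair_loop w \<delta> L V g [1..<h+1] 0) = (\<Sum>k<h. \<delta> * real (card {g\<in>S. \<forall>j\<in>{1..Suc k}. stepP w L V j g})
     + (- (\<delta>/(2^w-1))) * (real (card {g\<in>S. \<forall>j\<in>{1..k}. stepP w L V j g}) - real (card {g\<in>S. \<forall>j\<in>{1..Suc k}. stepP w L V j g})))"
proof -
  let ?d = "- (\<delta>/(2^w-1))"
  have "(\<Sum>g\<in>S. stair_loop w \<delta> L V g [1..<h+1] 0) = (\<Sum>g\<in>S. \<Sum>k<h. if (\<forall>m<k. stepP w L V (Suc m) g)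
      then (if stepP w L V (Suc k) g then \<delta> else ?d) else 0)"
  proof (intro sum.cong refl)
    fix g
    have "stair_loop w \<delta> L V g [1..<h+1] 0 = (\<Sum>k<h. if (\<forall>m<k. stepP w L V ([1..<h+1]!m) g)
      then (if stepP w L V ([1..<h+1]!k) g then \<delta> else ?d) else 0)"
      by (simp only: loop_sum length_upt diff_add_inverse2 add_0)
    also have "\<dots> = (\<Sum>k<h. if (\<forall>m<k. stepP w L V (Suc m) g)
      then (if stepP w L V (Suc k) g then \<delta> else ?d) else 0)"
    proof (intro sum.cong refl)
      fix k assume k: "k \<in> {..<h}"
      have "(\<forall>m<k. stepP w L V ([1..<h+1]!m) g) \<longleftrightarrow> (\<forall>m<k. stepP w L V (Suc m) g)"
        using k by (auto simp del: upt_Suc simp add: nth_h)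
      moreover have "[1..<h+1]!k = Suc k" using k by (simp del: upt_Suc add: nth_h)
      ultimately show "(if (\<forall>m<k. stepP w L V ([1..<h+1]!m) g)
      then (if stepP w L V ([1..<h+1]!k) g then \<delta> else ?d) else 0) = (if (\<forall>m<k. stepP w L V (Suc m) g)
      then (if stepP w L V (Suc k) g then \<delta> else ?d) else 0)" by (simp only:)
    qed
    finally show "stair_loop w \<delta> L V g [1..<h+1] 0 = (\<Sum>k<h. if (\<forall>m<k. stepP w L V (Suc m) g)
      then (if stepP w L V (Suc k) g then \<delta> else ?d) else 0)" .
  qed
  also have "\<dots> = (\<Sum>k<h. \<Sum>g\<in>S. if (\<forall>m<k. stepP w L V (Suc m) g)
      then (if stepP w L V (Suc k) g then \<delta> else ?d) else 0)"
    by (rule sum.swap)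
  also have "\<dots> = (\<Sum>k<h. \<delta> * real (card {g\<in>S. \<forall>j\<in>{1..Suc k}. stepP w L V j g})
     + ?d * (real (card {g\<in>S. \<forall>j\<in>{1..k}. stepP w L V j g}) - real (card {g\<in>S. \<forall>j\<in>{1..Suc k}. stepP w L V j g})))"
  proof (intro sum.cong refl)
    fix k
    show "(\<Sum>g\<in>S. if (\<forall>m<k. stepP w L V (Suc m) g)
      then (if stepP w L V (Suc k) g then \<delta> else ?d) else 0) = \<delta> * real (card {g\<in>S. \<forall>j\<in>{1..Suc k}. stepP w L V j g})
     + ?d * (real (card {g\<in>S. \<forall>j\<in>{1..k}. stepP w L V j g}) - real (card {g\<in>S. \<forall>j\<in>{1..Suc k}. stepP w L V j g}))"
      using sum_ite[OF assms, of "\<lambda>g. \<forall>m<k. stepP w L V (Suc m) g" "\<lambda>g. stepP w L V (Suc k) g" \<delta> ?d]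
      unfolding set_shift2[of S k "\<lambda>j g. stepP w L V j g"] set_shift1[of S k "\<lambda>j g. stepP w L V j g"]
      by (simp only:)
  qed
  finally show ?thesis .
qed


lemma F_int:
  assumes "finite S" "S \<noteq> {}"
  shows "(\<integral>x. x \<partial>F_schema h w \<delta> l L V S) = (\<Sum>g\<in>S. stair_loop w \<delta> L V g [1..<h+1] 0) / card S"
  unfolding F_schema_def
  by (subst mix[OF assms]) (auto simp: stair_props)

theorem theorem1:
  fixes h w l :: nat and \<delta> :: real
    and L :: "nat \<Rightarrow> nat \<Rightarrow> nat" and V :: "nat \<Rightarrow> nat \<Rightarrow> bool" and i :: nat
  assumes "is_staircase_descriptor h w \<delta> l L V"
    and "i \<in> {1..h}"
  shows "fitness_signal h w \<delta> l L V (step_schema h w \<delta> l L V i) = \<delta> / 2 ^ (w * (i - 1))"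
proof -
  note D = assms(1)
  have w: "0 < w" and wh: "h * w \<le> l"
    using D unfolding is_staircase_descriptor_def by auto
  have i1: "1 \<le> i" and ih: "i \<le> h" using assms(2) by auto
  define q where "q = (2::real)^w"
  have q2: "2 \<le> q" unfolding q_def using power_increasing[of 1 w "2::real"] w by simp
  define X where "X = (2::real)^l"
  have X0: "X > 0" by (simp add: X_def)
  define B where "B = bitstrings l"
  define P where "P = stepP w L V"
  have finB: "finite B"
  proof -
    have "B = {xs. set xs \<subseteq> (UNIV::bool set) \<and> length xs = l}" by (simp add: B_def bitstrings_def)
    then show ?thesis using finite_lists_length_eq[of "UNIV::bool set" l] by simp
  qed
  have CB: "real (card {g\<in>B. \<forall>j\<in>J. P j g}) = X / q^card J" if J: "J \<subseteq> {1..h}" for J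
  proof -
    have "card J \<le> h" using card_mono[OF _ J] by simp
    then have le: "w * card J \<le> l" using wh by (metis mult.commute mult_le_mono1 order_trans)
    have "card {g\<in>B. \<forall>j\<in>J. P j g} = 2^(l - w * card J)"
      unfolding B_def P_def by (rule cnt_B[OF D J])
    then have "real (card {g\<in>B. \<forall>j\<in>J. P j g}) = (2::real)^(l - w * card J)" by simp
    also have "\<dots> = X / q^card J" unfolding X_def q_def
      by (simp add: power_diff[OF _ le] power_mult)
    finally show ?thesis .
  qed
  have Si: "step_schema h w \<delta> l L V i = {g\<in>B. P i g}"
    by (simp add: step_schema_def B_def P_def stepP_def)
  have CS: "{g\<in>{g\<in>B. P i g}. \<forall>j\<in>J. P j g} = {g\<in>B. \<forall>j\<in>insert i J. P j g}" for J
    by auto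
  have zero: "\<delta> * (X / q^Suc n) + - (\<delta> / (q - 1)) * (X / q^n - X / q^Suc n) = 0" for n
    using q2 by (simp add: field_simps)
  have sumB: "(\<Sum>g\<in>B. stair_loop w \<delta> L V g [1..<h+1] 0) = 0"
    unfolding sum_c[OF finB]
  proof (intro sum.neutral ballI)
    fix k assume k: "k \<in> {..<h}"
    have s1: "{1..Suc k} \<subseteq> {1..h}" "{1..k} \<subseteq> {1..h}" using k by auto
    show "\<delta> * real (card {g\<in>B. \<forall>j\<in>{1..Suc k}. stepP w L V j g}) +
       - (\<delta> / (2 ^ w - 1)) * (real (card {g\<in>B. \<forall>j\<in>{1..k}. stepP w L V j g}) -
         real (card {g\<in>B. \<forall>j\<in>{1..Suc k}. stepP w L V j g})) = 0"
      using CB[OF s1(1)] CB[OF s1(2)] zero[of k] unfolding P_def q_def by simp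
  qed
  let ?S = "{g\<in>B. P i g}"
  have finS: "finite ?S" using finB by simp
  have sumS: "(\<Sum>g\<in>?S. stair_loop w \<delta> L V g [1..<h+1] 0) = \<delta> * X / q^i"
  proof -
    have "(\<Sum>g\<in>?S. stair_loop w \<delta> L V g [1..<h+1] 0) = (\<Sum>k<h. if k = i - 1 then \<delta> * X / q^i else 0)"
      unfolding sum_c[OF finS]
    proof (intro sum.cong refl)
      fix k assume k: "k \<in> {..<h}"
      have s1: "insert i {1..Suc k} \<subseteq> {1..h}" "insert i {1..k} \<subseteq> {1..h}" using k i1 ih by auto
      have A: "real (card {g\<in>?S. \<forall>j\<in>{1..Suc k}. stepP w L V j g}) = X / q^card (insert i {1..Suc k})"
        using CB[OF s1(1)] CS[of "{1..Suc k}"] unfolding P_def by simp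
      have Bk: "real (card {g\<in>?S. \<forall>j\<in>{1..k}. stepP w L V j g}) = X / q^card (insert i {1..k})"
        using CB[OF s1(2)] CS[of "{1..k}"] unfolding P_def by simp
      show "\<delta> * real (card {g\<in>?S. \<forall>j\<in>{1..Suc k}. stepP w L V j g}) +
       - (\<delta> / (2 ^ w - 1)) * (real (card {g\<in>?S. \<forall>j\<in>{1..k}. stepP w L V j g}) -
         real (card {g\<in>?S. \<forall>j\<in>{1..Suc k}. stepP w L V j g})) = (if k = i - 1 then \<delta> * X / q^i else 0)"
      proof -
        have e: "(2::real)^w = q" by (simp add: q_def)
        obtain a b where ab: "card (insert i {1..Suc k}) = a" "card (insert i {1..k}) = b" by blast
        have r: "(if k = i - 1 then \<delta> * X / q^i else 0) = \<delta> * (X / q ^ a) + - (\<delta> / (q - 1)) * (X / q ^ b - X / q ^ a)"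
        proof (cases "i \<le> k")
          case True
          have e1: "insert i {1..Suc k} = {1..Suc k}" and e2: "insert i {1..k} = {1..k}" and e3: "k \<noteq> i - 1"
            using i1 True by auto
          have "a = Suc k" using ab(1) unfolding e1 by simp
          moreover have "b = k" using ab(2) unfolding e2 by simp
          ultimately have "a = Suc k" "b = k" "k \<noteq> i - 1" using e3 by blast+
          then show ?thesis using zero[of k] by simp
        next
          case False
          show ?thesis
          proof (cases "i = Suc k")
            case True
            have e1: "insert i {1..Suc k} = {1..Suc k}" and e2: "insert i {1..k} = {1..Suc k}" and e3: "k = i - 1"
              using True by auto
            have "a = Suc k" using ab(1) unfolding e1 by simp
            moreover have "b = Suc k" using ab(2) unfolding e2 by simp
            ultimately have "a = i" "b = i" using True by simp_all
            with e3 have "a = i" "b = i" "k = i - 1" by blast+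
            then show ?thesis by simp
          next
            case F2: False
            have "i \<notin> {1..Suc k}" "i \<notin> {1..k}" using False F2 by auto
            then have c1: "card (insert i {1..Suc k}) = Suc (Suc k)" and c2: "card (insert i {1..k}) = Suc k"
              by simp_all
            have e3: "k \<noteq> i - 1" using False F2 i1 by simp
            have "a = Suc (Suc k)" "b = Suc k" "k \<noteq> i - 1" using ab c1 c2 e3 by simp_all
            then show ?thesis using zero[of "Suc k"] by simp
          qed
        qed
        show ?thesis unfolding A Bk e ab r by (rule refl)
      qed
    qed
    also have "\<dots> = \<delta> * X / q^i" using i1 ih by (simp add: sum.delta)
    finally show ?thesis .
  qed
  have cardS: "real (card ?S) = X / q"
    using CB[of "{i}"] CS[of "{}"] i1 ih by simp
  have "real (card ?S) > 0" using cardS X0 q2 by simp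
  then have S0: "?S \<noteq> {}" by (metis card.empty of_nat_0 less_irrefl)
  have B0: "B \<noteq> {}" using S0 by auto
  have "fitness_signal h w \<delta> l L V (step_schema h w \<delta> l L V i) = (\<delta> * X / q^i) / (X / q) - 0 / card B"
    unfolding fitness_signal_def Si
    using F_int[OF finS S0, of h w \<delta> l L V] F_int[OF finB B0, of h w \<delta> l L V] sumS sumB cardS
    by (simp add: B_def)
  also have "\<dots> = \<delta> / q^(i - 1)"
  proof -
    have "q^i = q * q^(i-1)" using i1 by (metis Suc_diff_1 less_le_trans power_Suc zero_less_one)
    then show ?thesis using X0 q2 by (simp add: field_simps)
  qed
  also have "\<dots> = \<delta> / 2 ^ (w * (i - 1))" by (simp add: q_def power_mult)
  finally show ?thesis .
qed

end
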